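(* The map $E\mapsto\mathfrak m_E$ from $[0,+\infty)$ to the space $\mathcal M_c(\mathbb R)$ of compactly supported Radon measures on $\mathbb R$ is weakly-* continuous: for every $\varphi\in C^0(\mathbb R)$ and every $E_0\in[0,+\infty)$, $$\langle\mathfrak m_E,\varphi\rangle\to\langle\mathfrak m_{E_0},\varphi\rangle\quad\text{as }E\to E_0\ (\text{as }E\to0^+\text{ if }E_0=0).$$
   Context: Let $V(x)=(x^2/2-1)^2$, $x_+(E)=\sqrt{2+2\sqrt E}$ for $E\ge0$, $x_-(E)=\sqrt{2-2\sqrt E}$ for $E\in[0,1]$ and $x_-(E)=0$ for $E\ge1$. For $E\in(0,1)\cup(1,\infty)$ let $C(E)=\left(\int_{x_-(E)}^{x_+(E)}(E-V(x))^{-1/2}dx\right)^{-1}$. Define the measures: $\mathfrak m_0=\frac12(\delta_{-\sqrt2}+\delta_{\sqrt2})$; for $E\in(0,1)$, $\mathfrak m_E=\frac{C(E)}2\frac{\mathbf 1_{[-x_+(E),-x_-(E)]}(x)\,dx}{\sqrt{E-V(x)}}+\frac{C(E)}2\frac{\mathbf 1_{[x_-(E),x_+(E)]}(x)\,dx}{\sqrt{E-V(x)}}$; $\mathfrak m_1=\delta_0$; for $E>1$, $\mathfrak m_E=\frac{C(E)}2\frac{\mathbf 1_{[-x_+(E),x_+(E)]}(x)\,dx}{\sqrt{E-V(x)}}$. *)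

theory Defs
  imports "HOL-Probability.Probability"
begin

definition V :: "real \<Rightarrow> real" where
  "V x = (x^2 / 2 - 1)^2"

definition xplus :: "real \<Rightarrow> real" where
  "xplus E = sqrt (2 + 2 * sqrt E)"

definition xminus :: "real \<Rightarrow> real" where
  "xminus E = (if E \<le> 1 then sqrt (2 - 2 * sqrt E) else 0)"

definition Cnorm :: "real \<Rightarrow> real" where
  "Cnorm E = inverse (LBINT x=xminus E..xplus E. 1 / sqrt (E - V x))"

definition mE :: "real \<Rightarrow> real measure" where
  "mE E =
    (if E = 0 then measure_pmf (pmf_of_set {- sqrt 2, sqrt 2})
     else if E = 1 then measure_pmf (return_pmf 0)
     else if E < 1 then
       density lborel (\<lambda>x. ennreal
         (Cnorm E / 2 * indicator {- xplus E .. - xminus E} x / sqrt (E - V x)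
        + Cnorm E / 2 * indicator {xminus E .. xplus E} x / sqrt (E - V x)))
     else
       density lborel (\<lambda>x. ennreal
         (Cnorm E / 2 * indicator {- xplus E .. xplus E} x / sqrt (E - V x))))"

end

theory Submission
  imports Defs
begin

definition gg :: "real \<Rightarrow> real \<Rightarrow> real" where
  "gg s t = sqrt (2 + 2 * s * sin t)"

lemma V_gg: assumes "0 \<le> 2 + 2 * s * sin t" shows "V (gg s t) = (s * sin t)^2"
  using assms by (simp add: V_def gg_def add_divide_distrib)

lemma pos_on: assumes "0 \<le> s" "-pi/2 \<le> a" "a \<le> t" "t \<le> pi/2" "0 < 2 + 2 * s * sin a"
  shows "0 < 2 + 2 * s * sin t"
proof -
  have "sin a \<le> sin t" using assms by (intro sin_monotone_2pi_le) auto
  hence "s * sin a \<le> s * sin t" using assms(1) by (simp add: mult_left_mono)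
  thus ?thesis using assms by linarith
qed

lemma subst_nonneg:
  fixes s a b :: real and \<psi> :: "real \<Rightarrow> real"
  assumes s: "0 < s" and ab: "-pi/2 \<le> a" "a < b" "b \<le> pi/2" and pa: "0 < 2 + 2 * s * sin a"
    and cont: "continuous_on UNIV \<psi>"
    and nn: "\<And>t. a \<le> t \<Longrightarrow> t \<le> b \<Longrightarrow> 0 \<le> \<psi> (gg s t)"
  shows "set_integrable lborel (einterval (gg s a) (gg s b)) (\<lambda>x. \<psi> x / sqrt (s^2 - V x))"
    "(LBINT x = gg s a..gg s b. \<psi> x / sqrt (s^2 - V x)) = (LBINT t = a..b. \<psi> (gg s t) / gg s t)"
proof -
  define f where "f = (\<lambda>x. \<psi> x / sqrt (s^2 - V x))"
  define g' where "g' = (\<lambda>t. s * cos t / gg s t)"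
  have P: "a \<le> t \<Longrightarrow> t \<le> b \<Longrightarrow> 0 < 2 + 2 * s * sin t" for t
    using pos_on[of s a t] s ab pa by auto
  have cpos: "a < t \<Longrightarrow> t < b \<Longrightarrow> 0 < cos t" for t
    using ab by (intro cos_gt_zero_pi) auto
  have cnn: "a \<le> t \<Longrightarrow> t \<le> b \<Longrightarrow> 0 \<le> cos t" for t
    using ab by (intro cos_ge_zero) auto
  have ggpos: "a \<le> t \<Longrightarrow> t \<le> b \<Longrightarrow> 0 < gg s t" for t
    using P by (simp add: gg_def)
  have deriv: "DERIV (gg s) t :> g' t" if "a < t" "t < b" for t
  proof -
    have "DERIV (\<lambda>t. sqrt (2 + 2 * s * sin t)) t :> inverse (sqrt (2 + 2 * s * sin t)) / 2 * (2 * s * cos t)"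
      using P[of t] that by (auto intro!: derivative_eq_intros)
    thus ?thesis unfolding gg_def g'_def by (simp add: field_simps)
  qed
  have key: "f (gg s t) * g' t = \<psi> (gg s t) / gg s t" if "a < t" "t < b" for t
  proof -
    have "s^2 - V (gg s t) = (s * cos t)^2"
      using V_gg[of s t] P[of t] that by (simp add: power_mult_distrib cos_squared_eq algebra_simps)
    hence "sqrt (s^2 - V (gg s t)) = s * cos t" using s cpos[OF that] by simp
    thus ?thesis using s cpos[OF that] ggpos[of t] that unfolding f_def g'_def by (simp add: field_simps)
  qed
  have contg: "isCont (gg s) t" if "a \<le> t" "t \<le> b" for t
    using P[OF that] unfolding gg_def by (auto intro!: continuous_intros)
  have gne: "a \<le> t \<Longrightarrow> t \<le> b \<Longrightarrow> gg s t \<noteq> 0" for t using ggpos[of t] by simp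
  have cont2: "continuous_on {a..b} (\<lambda>t. \<psi> (gg s t) / gg s t)"
    using gne
    by (intro continuous_intros continuous_on_compose2[OF cont] continuous_at_imp_continuous_on)
       (auto intro: contg)
  have int2: "set_integrable lborel (einterval a b) (\<lambda>t. f (gg s t) * g' t)"
  proof -
    have "set_integrable lborel {a..b} (\<lambda>t. \<psi> (gg s t) / gg s t)"
      by (rule borel_integrable_atLeastAtMost'[OF cont2])
    hence "set_integrable lborel (einterval a b) (\<lambda>t. \<psi> (gg s t) / gg s t)"
      by (rule set_integrable_subset) auto
    thus ?thesis by (subst set_integrable_cong[OF refl refl, of _ _ "\<lambda>t. \<psi> (gg s t) / gg s t"]) (auto simp: key)
  qed
  note S = interval_integral_substitution_nonneg[of a b "gg s" g' f "gg s a" "gg s b"]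
  have hyps: "ereal a < ereal b"
     "\<And>x. ereal a < ereal x \<Longrightarrow> ereal x < ereal b \<Longrightarrow> DERIV (gg s) x :> g' x"
     "\<And>x. ereal a < ereal x \<Longrightarrow> ereal x < ereal b \<Longrightarrow> isCont f (gg s x)"
     "\<And>x. ereal a < ereal x \<Longrightarrow> ereal x < ereal b \<Longrightarrow> isCont g' x"
     "\<And>x. ereal a < ereal x \<Longrightarrow> ereal x < ereal b \<Longrightarrow> 0 \<le> f (gg s x)"
     "\<And>x. ereal a \<le> ereal x \<Longrightarrow> ereal x \<le> ereal b \<Longrightarrow> 0 \<le> g' x"
     "((ereal \<circ> gg s \<circ> real_of_ereal) \<longlongrightarrow> ereal (gg s a)) (at_right (ereal a))"
     "((ereal \<circ> gg s \<circ> real_of_ereal) \<longlongrightarrow> ereal (gg s b)) (at_left (ereal b))"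
  proof -
    show "ereal a < ereal b" using ab by simp
    show "\<And>x. ereal a < ereal x \<Longrightarrow> ereal x < ereal b \<Longrightarrow> DERIV (gg s) x :> g' x"
      using deriv by auto
    show "isCont f (gg s x)" if "ereal a < ereal x" "ereal x < ereal b" for x
    proof -
      have x: "a < x" "x < b" using that by auto
      have "s^2 - V (gg s x) = (s * cos x)^2"
        using V_gg[of s x] P[of x] x by (simp add: power_mult_distrib cos_squared_eq algebra_simps)
      hence "0 < s^2 - V (gg s x)" using s cpos[OF x] by simp
      thus ?thesis unfolding f_def V_def
        by (intro continuous_intros continuous_on_interior[OF cont]) auto
    qed
    show "isCont g' x" if "ereal a < ereal x" "ereal x < ereal b" for x
      using that ggpos[of x] contg[of x] unfolding g'_def by (auto intro!: continuous_intros)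
    show "0 \<le> f (gg s x)" if "ereal a < ereal x" "ereal x < ereal b" for x
    proof -
      have x: "a < x" "x < b" using that by auto
      have "s^2 - V (gg s x) = (s * cos x)^2"
        using V_gg[of s x] P[of x] x by (simp add: power_mult_distrib cos_squared_eq algebra_simps)
      thus ?thesis using nn[of x] x s cnn[of x] unfolding f_def by simp
    qed
    show "0 \<le> g' x" if "ereal a \<le> ereal x" "ereal x \<le> ereal b" for x
      using that ggpos[of x] cnn[of x] s unfolding g'_def by auto
    show "((ereal \<circ> gg s \<circ> real_of_ereal) \<longlongrightarrow> ereal (gg s a)) (at_right (ereal a))"
      unfolding ereal_tendsto_simps1 ereal_tendsto_simps2
      using contg[of a] ab by (auto intro: tendsto_within_subset simp: isCont_def)
    show "((ereal \<circ> gg s \<circ> real_of_ereal) \<longlongrightarrow> ereal (gg s b)) (at_left (ereal b))"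
      unfolding ereal_tendsto_simps1 ereal_tendsto_simps2
      using contg[of b] ab by (auto intro: tendsto_within_subset simp: isCont_def)
  qed
  show "set_integrable lborel (einterval (gg s a) (gg s b)) (\<lambda>x. \<psi> x / sqrt (s^2 - V x))"
    using S(1)[OF hyps int2] unfolding f_def .
  have "(LBINT x = gg s a..gg s b. f x) = (LBINT t=a..b. f (gg s t) * g' t)"
    using S(2)[OF hyps int2] .
  also have "\<dots> = (LBINT t = a..b. \<psi> (gg s t) / gg s t)"
    using ab by (intro interval_integral_cong) (auto simp: key min_def max_def)
  finally show "(LBINT x = gg s a..gg s b. \<psi> x / sqrt (s^2 - V x)) = (LBINT t = a..b. \<psi> (gg s t) / gg s t)"
    unfolding f_def .
qed

lemma ei_closed:
  fixes a b :: real and f :: "real \<Rightarrow> real" assumes "a \<le> b"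
  shows "set_integrable lborel {a<..<b} f \<longleftrightarrow> set_integrable lborel {a..b} f"
  by (rule set_integrable_discrete_difference[where X="{a,b}"]) auto

lemma subst_gen:
  fixes s a b :: real and \<psi> :: "real \<Rightarrow> real"
  assumes s: "0 < s" and ab: "-pi/2 \<le> a" "a < b" "b \<le> pi/2" and pa: "0 < 2 + 2 * s * sin a"
    and cont: "continuous_on UNIV \<psi>"
  shows "set_integrable lborel {gg s a..gg s b} (\<lambda>x. \<psi> x / sqrt (s^2 - V x))"
    "(LBINT x = gg s a..gg s b. \<psi> x / sqrt (s^2 - V x)) = integral {a..b} (\<lambda>t. \<psi> (gg s t) / gg s t)"
proof -
  have P: "a \<le> t \<Longrightarrow> t \<le> b \<Longrightarrow> 0 < 2 + 2 * s * sin t" for t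
    using pos_on[of s a t] s ab pa by auto
  have ggpos: "a \<le> t \<Longrightarrow> t \<le> b \<Longrightarrow> 0 < gg s t" for t
    using P by (simp add: gg_def)
  have gmono: "gg s a \<le> gg s b" unfolding gg_def
    using sin_monotone_2pi_le[of a b] ab s by (auto intro!: mult_left_mono)
  have contg: "isCont (gg s) t" if "a \<le> t" "t \<le> b" for t
    using P[OF that] unfolding gg_def by (auto intro!: continuous_intros)
  have "compact ((\<lambda>t. \<psi> (gg s t)) ` {a..b})"
    by (intro compact_continuous_image continuous_on_compose2[OF cont] continuous_at_imp_continuous_on)
       (auto intro: contg)
  then obtain M where M: "\<And>t. a \<le> t \<Longrightarrow> t \<le> b \<Longrightarrow> \<bar>\<psi> (gg s t)\<bar> \<le> M"
    using compact_imp_bounded[THEN bounded_real[THEN iffD1]] by fastforce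
  have c1: "continuous_on UNIV (\<lambda>x. \<psi> x + M)" by (intro continuous_intros cont)
  note A = subst_nonneg[OF s ab pa c1] subst_nonneg[OF s ab pa continuous_on_const, of M]
  have nn1: "\<And>t. a \<le> t \<Longrightarrow> t \<le> b \<Longrightarrow> 0 \<le> \<psi> (gg s t) + M" using M by force
  have nn2: "\<And>t. a \<le> t \<Longrightarrow> t \<le> b \<Longrightarrow> 0 \<le> M" using M by force
  note A1 = A(1,2)[OF nn1] and A2 = A(3,4)[OF nn2]
  have eq: "(\<lambda>x. \<psi> x / sqrt (s^2 - V x)) = (\<lambda>x. (\<psi> x + M) / sqrt (s^2 - V x) - M / sqrt (s^2 - V x))"
    by (rule ext) (simp add: diff_divide_distrib[symmetric])
  have I: "set_integrable lborel (einterval (gg s a) (gg s b)) (\<lambda>x. \<psi> x / sqrt (s^2 - V x))"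
    unfolding eq using A1(1) A2(1) by (rule set_integral_diff)
  thus "set_integrable lborel {gg s a..gg s b} (\<lambda>x. \<psi> x / sqrt (s^2 - V x))"
    using ei_closed[OF gmono] by simp
  have cont2: "continuous_on {a..b} (\<lambda>t. f (gg s t) / gg s t)" if "continuous_on UNIV f" for f
    using ggpos
    by (intro continuous_intros continuous_on_compose2[OF that] continuous_at_imp_continuous_on)
       (auto intro: contg simp: less_imp_neq[symmetric])
  have ii: "interval_lebesgue_integrable lborel (ereal a) (ereal b) (\<lambda>t. f (gg s t) / gg s t)" if "continuous_on UNIV f" for f
    using ab by (intro interval_integrable_continuous_on cont2 that) auto
  have ii1: "interval_lebesgue_integrable lborel (ereal (gg s a)) (ereal (gg s b)) (\<lambda>x. f x / sqrt (s^2 - V x))"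
    if "set_integrable lborel (einterval (gg s a) (gg s b)) (\<lambda>x. f x / sqrt (s^2 - V x))" for f
    using that gmono by (simp add: interval_lebesgue_integrable_def)
  have "(LBINT x = gg s a..gg s b. \<psi> x / sqrt (s^2 - V x))
       = (LBINT x = gg s a..gg s b. (\<psi> x + M) / sqrt (s^2 - V x)) - (LBINT x = gg s a..gg s b. M / sqrt (s^2 - V x))"
    unfolding eq by (intro interval_lebesgue_integral_diff ii1 A1(1) A2(1))
  also have "\<dots> = (LBINT t = a..b. (\<psi> (gg s t) + M) / gg s t) - (LBINT t = a..b. M / gg s t)"
    using A1(2) A2(2) by simp
  also have "\<dots> = (LBINT t = a..b. \<psi> (gg s t) / gg s t)"
    by (subst interval_lebesgue_integral_diff(2)[symmetric])
       (auto intro!: ii c1 continuous_intros cont simp: add_divide_distrib)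
  also have "\<dots> = integral {a..b} (\<lambda>t. \<psi> (gg s t) / gg s t)"
    using ab by (intro interval_integral_eq_integral borel_integrable_atLeastAtMost' cont2 cont) auto
  finally show "(LBINT x = gg s a..gg s b. \<psi> x / sqrt (s^2 - V x)) = integral {a..b} (\<lambda>t. \<psi> (gg s t) / gg s t)" .
qed

definition KK :: "real \<Rightarrow> (real \<Rightarrow> real) \<Rightarrow> real" where
  "KK E \<psi> = (if E < 1 then integral {-pi/2..pi/2} (\<lambda>t. \<psi> (gg (sqrt E) t) / gg (sqrt E) t)
     else integral {0..sqrt 2} (\<lambda>x. \<psi> x / sqrt (E - V x))
        + integral {0..pi/2} (\<lambda>t. \<psi> (gg (sqrt E) t) / gg (sqrt E) t))"

lemma V_le1: assumes "0 \<le> x" "x \<le> sqrt 2" shows "V x \<le> 1"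
proof -
  have "x^2 \<le> (sqrt 2)^2" by (rule power_mono) (use assms in auto)
  hence "x^2 \<le> 2" by simp
  hence "-1 \<le> x^2/2 - 1 \<and> x^2/2 - 1 \<le> 0" by auto
  hence "(x^2/2 - 1)^2 \<le> 1" by (simp add: abs_square_le_1 abs_le_iff)
  thus ?thesis by (simp add: V_def)
qed

lemma contX: assumes "1 < E" "continuous_on UNIV \<psi>"
  shows "continuous_on {0..sqrt 2} (\<lambda>x. \<psi> x / sqrt (E - V x))"
proof -
  have nz: "E \<noteq> V x" if "0 \<le> x" "x \<le> sqrt 2" for x
  proof -
    have "V x \<le> 1" using that by (intro V_le1) auto
    thus ?thesis using assms(1) by simp
  qed
  have cV: "continuous_on {0..sqrt 2} V" unfolding V_def by (intro continuous_intros) auto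
  show ?thesis
    by (intro continuous_on_divide continuous_on_subset[OF assms(2)] continuous_on_compose2[OF continuous_on_real_sqrt]
        continuous_on_diff continuous_on_const cV) (auto simp: nz)
qed

lemma R1:
  fixes \<psi> :: "real \<Rightarrow> real"
  assumes E: "0 < E" "E \<noteq> 1" and cont: "continuous_on UNIV \<psi>"
  shows "set_integrable lborel {xminus E..xplus E} (\<lambda>x. \<psi> x / sqrt (E - V x))"
    "(LBINT x = xminus E..xplus E. \<psi> x / sqrt (E - V x)) = KK E \<psi>"
proof -
  define s where "s = sqrt E"
  have s: "0 < s" "s^2 = E" using E by (auto simp: s_def)
  have xp: "xplus E = gg s (pi/2)" by (simp add: xplus_def gg_def s_def)
  have main: "set_integrable lborel {xminus E..xplus E} (\<lambda>x. \<psi> x / sqrt (E - V x)) \<and>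
    (LBINT x = xminus E..xplus E. \<psi> x / sqrt (E - V x)) = KK E \<psi>"
  proof (cases "E < 1")
    case True
    have xm: "xminus E = gg s (-pi/2)" using True by (simp add: xminus_def gg_def s_def)
    have s1: "s < 1" using True by (simp add: s_def)
    note G = subst_gen[OF s(1) _ _ _ _ cont, of "-pi/2" "pi/2", unfolded s(2)]
    have "0 < 2 + 2 * s * sin (-pi/2)" using s1 by simp
    from G[OF _ _ _ this] have g:
      "set_integrable lborel {gg s (-pi/2)..gg s (pi/2)} (\<lambda>x. \<psi> x / sqrt (E - V x))"
      "(LBINT x = gg s (-pi/2)..gg s (pi/2). \<psi> x / sqrt (E - V x)) = integral {-pi/2..pi/2} (\<lambda>t. \<psi> (gg s t) / gg s t)"
      by auto
    show ?thesis unfolding xm xp KK_def using True g by (simp add: s_def)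
  next
    case False
    hence E1: "1 < E" using E by auto
    have xm: "xminus E = 0" using E1 by (simp add: xminus_def)
    have r2: "sqrt 2 = gg s 0" by (simp add: gg_def)
    note G = subst_gen[OF s(1) _ _ _ _ cont, of 0 "pi/2", unfolded s(2)]
    have G1: "set_integrable lborel {sqrt 2..xplus E} (\<lambda>x. \<psi> x / sqrt (E - V x))"
      "(LBINT x = sqrt 2..xplus E. \<psi> x / sqrt (E - V x)) = integral {0..pi/2} (\<lambda>t. \<psi> (gg s t) / gg s t)"
      using G unfolding r2[symmetric] xp[symmetric] by auto
    have le: "sqrt 2 \<le> xplus E" unfolding xplus_def using E by simp
    have I0: "set_integrable lborel {0..sqrt 2} (\<lambda>x. \<psi> x / sqrt (E - V x))"
      by (rule borel_integrable_atLeastAtMost'[OF contX[OF E1 cont]])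
    have un: "{0..sqrt 2} \<union> {sqrt 2..xplus E} = {0..xplus E}"
      using le order_trans[OF real_sqrt_ge_zero[of 2]] by auto
    have I: "set_integrable lborel {0..xplus E} (\<lambda>x. \<psi> x / sqrt (E - V x))"
      using set_integrable_Un[OF I0 G1(1)] un by simp
    have I': "set_integrable lborel (einterval 0 (ereal (xplus E))) (\<lambda>x. \<psi> x / sqrt (E - V x))"
      by (rule set_integrable_subset[OF I]) (auto simp: einterval_iff)
    have "(LBINT x = 0..xplus E. \<psi> x / sqrt (E - V x)) =
        (LBINT x = 0..sqrt 2. \<psi> x / sqrt (E - V x)) + (LBINT x = sqrt 2..xplus E. \<psi> x / sqrt (E - V x))"
      apply (rule interval_integral_sum[symmetric])
      using le I' real_sqrt_ge_zero[of 2] xplus_def[of E]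
      by (simp add: interval_lebesgue_integrable_def min_def max_def)
    also have "(LBINT x = 0..sqrt 2. \<psi> x / sqrt (E - V x)) = integral {0..sqrt 2} (\<lambda>x. \<psi> x / sqrt (E - V x))"
      unfolding zero_ereal_def by (intro interval_integral_eq_integral I0) simp
    finally show ?thesis using I E1 G1 by (simp add: xm KK_def s_def zero_ereal_def[symmetric])
  qed
  show "set_integrable lborel {xminus E..xplus E} (\<lambda>x. \<psi> x / sqrt (E - V x))"
    using main by (rule conjunct1)
  show "(LBINT x = xminus E..xplus E. \<psi> x / sqrt (E - V x)) = KK E \<psi>"
    using main by (rule conjunct2)
qed

lemma si_reflect:
  fixes f :: "real \<Rightarrow> real"
  assumes "set_integrable lborel {a..b} (\<lambda>x. f (-x))"
  shows "set_integrable lborel {-b..-a} f"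
proof -
  have eq: "(\<lambda>x. indicator {-b..-a} (0 + -1*x) *\<^sub>R f (0 + -1*x)) = (\<lambda>x. indicator {a..b} x *\<^sub>R f (-x))"
    by (auto simp: indicator_def fun_eq_iff)
  have "integrable lborel (\<lambda>x. indicator {-b..-a} (0 + -1*x) *\<^sub>R f (0 + -1*x))"
    using assms unfolding eq set_integrable_def .
  thus ?thesis unfolding set_integrable_def
    using lborel_integrable_real_affine_iff[of "-1" "\<lambda>x. indicator {-b..-a} x *\<^sub>R f x" 0] by simp
qed

lemma Vle: assumes "0 \<le> E" "xminus E \<le> \<bar>x\<bar>" "\<bar>x\<bar> \<le> xplus E" shows "V x \<le> E"
proof -
  define s where "s = sqrt E"
  have s: "0 \<le> s" "s^2 = E" using assms by (auto simp: s_def)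
  have "\<bar>x\<bar>^2 \<le> (xplus E)^2" by (rule power_mono) (use assms in auto)
  hence up: "x^2 \<le> 2 + 2 * s" unfolding xplus_def s_def using assms by simp
  have lo: "-s \<le> x^2/2 - 1"
  proof (cases "E \<le> 1")
    case True
    have "(xminus E)^2 \<le> \<bar>x\<bar>^2" by (rule power_mono) (use assms in \<open>auto simp: xminus_def\<close>)
    hence "2 - 2 * s \<le> x^2" unfolding xminus_def s_def using True assms by simp
    thus ?thesis by simp
  next
    case False
    hence "1 \<le> s" unfolding s_def by simp
    moreover have "0 \<le> x^2" by simp
    ultimately show ?thesis by linarith
  qed
  have "\<bar>x^2/2 - 1\<bar> \<le> \<bar>s\<bar>" using up lo s by (simp add: abs_le_iff)
  hence "(x^2/2 - 1)^2 \<le> s^2" by (simp add: abs_le_square_iff)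
  thus ?thesis using s by (simp add: V_def)
qed

lemma Cnorm_eq: assumes "0 < E" "E \<noteq> 1" shows "Cnorm E = inverse (KK E (\<lambda>_. 1))"
  using R1(2)[OF assms continuous_on_const, of 1] by (simp add: Cnorm_def)

lemma meas_V[measurable]: "V \<in> borel_measurable borel"
  unfolding V_def by measurable

lemma cont_theta:
  assumes cont: "continuous_on UNIV \<psi>" and pos: "\<And>t. t \<in> {a..b} \<Longrightarrow> 0 < 2 + 2 * s * sin t"
  shows "continuous_on {a..b} (\<lambda>t. \<psi> (gg s t) / gg s t)"
proof -
  have "continuous_on {a..b} (gg s)" unfolding gg_def by (intro continuous_intros)
  moreover have "\<forall>t\<in>{a..b}. gg s t \<noteq> 0"
  proof
    fix t assume "t \<in> {a..b}"
    from pos[OF this] show "gg s t \<noteq> 0" by (simp add: gg_def)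
  qed
  ultimately show ?thesis
    by (intro continuous_on_divide continuous_on_compose2[OF cont]) auto
qed

lemma KK_pos: assumes "0 < E" "E \<noteq> 1" shows "0 < KK E (\<lambda>_. 1)"
proof -
  define s where "s = sqrt E"
  have s: "0 < s" using assms by (simp add: s_def)
  show ?thesis
  proof (cases "E < 1")
    case True
    have s1: "s < 1" using True by (simp add: s_def)
    have pos: "0 < 2 + 2 * s * sin t" for t
    proof -
      have "-1 \<le> sin t" by simp
      hence "-s \<le> s * sin t" using s by (metis mult.right_neutral mult_left_mono mult_minus_right less_imp_le)
      thus ?thesis using s1 by linarith
    qed
    have le2: "1/2 \<le> 1 / gg s t" for t
    proof -
      have "s * sin t \<le> 1" using s s1 by (smt (verit) mult_left_le sin_le_one)
      hence "gg s t \<le> 2" unfolding gg_def by (simp add: real_sqrt_le_iff[of _ 4, simplified])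
      moreover have "0 < gg s t" using pos[of t] by (simp add: gg_def)
      ultimately show ?thesis by (simp add: field_simps)
    qed
    have "integral {-pi/2..pi/2} (\<lambda>_. 1/2) \<le> integral {-pi/2..pi/2} (\<lambda>t. 1 / gg s t)"
      by (intro integral_le integrable_continuous_interval cont_theta[OF continuous_on_const, of _ _ _ 1, simplified]
          continuous_on_const le2 pos)
    moreover have "integral {-pi/2..pi/2} (\<lambda>_. 1/2::real) = pi/2" by simp
    ultimately show ?thesis using True pi_gt_zero by (simp add: KK_def s_def, linarith)
  next
    case False
    hence E1: "1 < E" using assms by auto
    have pos: "t \<in> {0..pi/2} \<Longrightarrow> 0 < 2 + 2 * s * sin t" for t
      using s sin_ge_zero[of t] by (simp add: add_pos_nonneg)
    have lo: "t \<in> {0..pi/2} \<Longrightarrow> 1 / sqrt (2 + 2 * s) \<le> 1 / gg s t" for t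
    proof -
      assume t: "t \<in> {0..pi/2}"
      have "s * sin t \<le> s" using s by (simp add: mult_left_le)
      hence "gg s t \<le> sqrt (2 + 2 * s)" unfolding gg_def by simp
      moreover have "0 < gg s t" using pos[OF t] by (simp add: gg_def)
      ultimately show ?thesis by (simp add: frac_le)
    qed
    have "integral {0..pi/2} (\<lambda>_. 1 / sqrt (2 + 2 * s)) \<le> integral {0..pi/2} (\<lambda>t. 1 / gg s t)"
      by (intro integral_le integrable_continuous_interval cont_theta[OF continuous_on_const, of _ _ _ 1, simplified]
          continuous_on_const lo pos) auto
    moreover have "0 < integral {0..pi/2} (\<lambda>_. 1 / sqrt (2 + 2 * s))" using s by simp
    moreover have "0 \<le> integral {0..sqrt 2} (\<lambda>x. 1 / sqrt (E - V x))"
    proof (rule integral_nonneg)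
      show "(\<lambda>x. 1 / sqrt (E - V x)) integrable_on {0..sqrt 2}"
        using integrable_continuous_interval[OF contX[OF E1 continuous_on_const, of 1]] by simp
      show "\<And>x. x \<in> {0..sqrt 2} \<Longrightarrow> 0 \<le> 1 / sqrt (E - V x)" using V_le1 E1 by force
    qed
    ultimately show ?thesis using E1 by (simp add: KK_def s_def)
  qed
qed

lemma V_minus[simp]: "V (-x) = V x" by (simp add: V_def)

lemma R2:
  fixes \<phi> :: "real \<Rightarrow> real"
  assumes E: "0 < E" "E \<noteq> 1" and cont: "continuous_on UNIV \<phi>"
  shows "integral\<^sup>L (mE E) \<phi> = Cnorm E / 2 * KK E (\<lambda>x. \<phi> x + \<phi> (-x))"
proof -
  define c where "c = Cnorm E / 2"
  define r where "r x = sqrt (E - V x)" for x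
  have c: "0 \<le> c" unfolding c_def using Cnorm_eq[OF E] KK_pos[OF E] by simp
  have rr: "r (-x) = r x" for x by (simp add: r_def V_def)
  have rnn: "xminus E \<le> \<bar>x\<bar> \<Longrightarrow> \<bar>x\<bar> \<le> xplus E \<Longrightarrow> 0 \<le> r x" for x
    using Vle[of E x] E by (simp add: r_def)
  have cm: "continuous_on UNIV (\<lambda>x. \<phi> (-x))" by (intro continuous_on_compose2[OF cont] continuous_intros) auto
  have cs: "continuous_on UNIV (\<lambda>x. \<phi> x + \<phi> (-x))" by (intro continuous_intros cm cont)
  have mphi[measurable]: "\<phi> \<in> borel_measurable borel" using cont by (rule borel_measurable_continuous_onI)
  have r_meas[measurable]: "r \<in> borel_measurable borel" unfolding r_def by measurable
  have xm0: "0 \<le> xminus E" by (simp add: xminus_def)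
  have xmp: "xminus E \<le> xplus E" using E by (simp add: xminus_def xplus_def)
  let ?B = "{xminus E..xplus E}"
  have IB: "set_integrable lborel ?B (\<lambda>x. \<phi> x / r x)"
    using R1(1)[OF E cont] by (simp add: r_def)
  have IBm: "set_integrable lborel ?B (\<lambda>x. \<phi> (-x) / r (-x))"
    using R1(1)[OF E cm] by (simp add: r_def rr)
  have IA: "set_integrable lborel {-xplus E..-xminus E} (\<lambda>x. \<phi> x / r x)"
    by (rule si_reflect[OF IBm])
  have reflA: "(LINT x:{-xplus E..-xminus E}|lborel. \<phi> x / r x) = (LINT x:?B|lborel. \<phi> (-x) / r x)"
  proof -
    have "{x. - x \<in> {-xplus E..-xminus E}} = ?B" by auto
    thus ?thesis by (subst set_integral_reflect) (simp add: rr)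
  qed
  have sumB: "(LINT x:?B|lborel. \<phi> (-x) / r x) + (LINT x:?B|lborel. \<phi> x / r x) = KK E (\<lambda>x. \<phi> x + \<phi> (-x))"
  proof -
    have "(LINT x:?B|lborel. \<phi> (-x) / r x) + (LINT x:?B|lborel. \<phi> x / r x)
        = (LINT x:?B|lborel. \<phi> (-x) / r x + \<phi> x / r x)"
      using IBm IB by (simp add: rr set_integral_add)
    also have "\<dots> = (LINT x:?B|lborel. (\<phi> x + \<phi> (-x)) / r x)"
      by (simp add: add_divide_distrib add.commute)
    also have "\<dots> = KK E (\<lambda>x. \<phi> x + \<phi> (-x))"
      using R1(2)[OF E cs] unfolding interval_integral_Icc[OF xmp] by (simp add: r_def)
    finally show ?thesis .
  qed
  show ?thesis
  proof (cases "E < 1")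
    case True
    let ?D = "\<lambda>x. c * indicator {-xplus E..-xminus E} x / r x + c * indicator ?B x / r x"
    have mE: "mE E = density lborel (\<lambda>x. ennreal (?D x))"
      using E True by (simp add: mE_def c_def r_def)
    have Dnn: "0 \<le> ?D x" for x
    proof -
      have "0 \<le> c * indicator {-xplus E..-xminus E} x / r x"
      proof (cases "x \<in> {-xplus E..-xminus E}")
        case True
        hence "xminus E \<le> \<bar>x\<bar>" "\<bar>x\<bar> \<le> xplus E" using xm0 by auto
        hence "0 \<le> r x" by (rule rnn)
        thus ?thesis using c True by simp
      qed simp
      moreover have "0 \<le> c * indicator ?B x / r x"
      proof (cases "x \<in> ?B")
        case True
        hence "xminus E \<le> \<bar>x\<bar>" "\<bar>x\<bar> \<le> xplus E" using xm0 by auto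
        hence "0 \<le> r x" by (rule rnn)
        thus ?thesis using c True by simp
      qed simp
      ultimately show ?thesis by simp
    qed
    have "integral\<^sup>L (mE E) \<phi> = (LINT x|lborel. ?D x *\<^sub>R \<phi> x)"
      unfolding mE by (rule integral_density) (auto simp: Dnn)
    also have "\<dots> = (LINT x|lborel. c * (indicator {-xplus E..-xminus E} x *\<^sub>R (\<phi> x / r x))
                        + c * (indicator ?B x *\<^sub>R (\<phi> x / r x)))"
      by (rule Bochner_Integration.integral_cong) (auto simp: indicator_def field_simps)
    also have "\<dots> = c * (LINT x:{-xplus E..-xminus E}|lborel. \<phi> x / r x) + c * (LINT x:?B|lborel. \<phi> x / r x)"
    proof -
      have i1: "integrable lborel (\<lambda>x. c * (indicator {-xplus E..-xminus E} x *\<^sub>R (\<phi> x / r x)))"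
        using IA unfolding set_integrable_def by (rule integrable_mult_right)
      have i2: "integrable lborel (\<lambda>x. c * (indicator ?B x *\<^sub>R (\<phi> x / r x)))"
        using IB unfolding set_integrable_def by (rule integrable_mult_right)
      show ?thesis unfolding Bochner_Integration.integral_add[OF i1 i2] set_lebesgue_integral_def
        by (simp only: integral_mult_right_zero)
    qed
    also have "\<dots> = c * KK E (\<lambda>x. \<phi> x + \<phi> (-x))"
      using sumB reflA by (simp add: distrib_left[symmetric] add.commute)
    finally show ?thesis by (simp add: c_def)
  next
    case False
    hence E1: "1 < E" using E by simp
    have xm: "xminus E = 0" using E1 by (simp add: xminus_def)
    let ?D = "\<lambda>x. c * indicator {-xplus E..xplus E} x / r x"
    have mE: "mE E = density lborel (\<lambda>x. ennreal (?D x))"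
      using E False by (simp add: mE_def c_def r_def)
    have Dnn: "0 \<le> ?D x" for x
    proof (cases "x \<in> {-xplus E..xplus E}")
      case True
      hence "xminus E \<le> \<bar>x\<bar>" "\<bar>x\<bar> \<le> xplus E" using xm by auto
      hence "0 \<le> r x" by (rule rnn)
      thus ?thesis using c True by simp
    qed simp
    have un: "{-xplus E..xplus E} = {-xplus E..-xminus E} \<union> ?B" using xm by auto
    have "integral\<^sup>L (mE E) \<phi> = (LINT x|lborel. ?D x *\<^sub>R \<phi> x)"
      unfolding mE by (rule integral_density) (auto simp: Dnn)
    also have "\<dots> = (LINT x|lborel. c * (indicator {-xplus E..xplus E} x *\<^sub>R (\<phi> x / r x)))"
      by (rule Bochner_Integration.integral_cong) (auto simp: indicator_def field_simps)
    also have "\<dots> = c * (LINT x:{-xplus E..xplus E}|lborel. \<phi> x / r x)"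
      unfolding set_lebesgue_integral_def by (simp only: integral_mult_right_zero)
    also have "(LINT x:{-xplus E..xplus E}|lborel. \<phi> x / r x)
        = (LINT x:{-xplus E..-xminus E}|lborel. \<phi> x / r x) + (LINT x:?B|lborel. \<phi> x / r x)"
      unfolding un
    proof (rule set_integral_Un_AE[OF _ _ _ IA IB])
      show "AE x in lborel. \<not> (x \<in> {-xplus E..-xminus E} \<and> x \<in> ?B)"
        using AE_lborel_singleton[of 0] by eventually_elim (auto simp: xm)
    qed auto
    also have "c * \<dots> = c * KK E (\<lambda>x. \<phi> x + \<phi> (-x))"
      using sumB reflA by (simp add: add.commute)
    finally show ?thesis by (simp add: c_def)
  qed
qed

definition JJ :: "real \<Rightarrow> real \<Rightarrow> real \<Rightarrow> (real \<Rightarrow> real) \<Rightarrow> real" where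
  "JJ a b s f = integral {a..b} (\<lambda>t. f (gg s t) / gg s t)"

definition XX :: "real \<Rightarrow> (real \<Rightarrow> real) \<Rightarrow> real" where
  "XX E f = integral {0..sqrt 2} (\<lambda>x. f x / sqrt (E - V x))"

lemma KK_JJ: "KK E f = (if E < 1 then JJ (-pi/2) (pi/2) (sqrt E) f else XX E f + JJ 0 (pi/2) (sqrt E) f)"
  by (simp add: KK_def JJ_def XX_def)

lemma JJ_cont:
  assumes cont: "continuous_on UNIV f" and pos: "\<And>s t. s \<in> U \<Longrightarrow> t \<in> {a..b} \<Longrightarrow> 0 < 2 + 2 * s * sin t"
  shows "continuous_on U (\<lambda>s. JJ a b s f)"
proof -
  have "continuous_on (U \<times> cbox a b) (\<lambda>(s, t). f (gg s t) / gg s t)"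
  proof -
    have cg: "continuous_on (U \<times> cbox a b) (\<lambda>p. gg (fst p) (snd p))"
      unfolding gg_def by (intro continuous_intros)
    have nz: "\<forall>p\<in>U \<times> cbox a b. gg (fst p) (snd p) \<noteq> 0"
    proof
      fix p assume "p \<in> U \<times> cbox a b"
      hence "0 < 2 + 2 * fst p * sin (snd p)" using pos[of "fst p" "snd p"] by (auto simp: cbox_interval)
      thus "gg (fst p) (snd p) \<noteq> 0" by (simp add: gg_def)
    qed
    have "continuous_on (U \<times> cbox a b) (\<lambda>p. f (gg (fst p) (snd p)) / gg (fst p) (snd p))"
      by (intro continuous_on_divide continuous_on_compose2[OF cont] cg nz) auto
    thus ?thesis by (simp add: case_prod_beta)
  qed
  from integral_continuous_on_param[OF this] show ?thesis by (simp add: JJ_def cbox_interval)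
qed

lemma XX_cont:
  assumes cont: "continuous_on UNIV f"
  shows "continuous_on {1<..} (\<lambda>E. XX E f)"
proof -
  have "continuous_on ({1<..} \<times> cbox 0 (sqrt 2)) (\<lambda>(E, x). f x / sqrt (E - V x))"
  proof -
    have cV: "continuous_on UNIV V" unfolding V_def by (intro continuous_intros) auto
    have nz: "\<forall>p\<in>{1<..} \<times> cbox 0 (sqrt 2). sqrt (fst p - V (snd p)) \<noteq> 0"
    proof
      fix p :: "real \<times> real" assume "p \<in> {1<..} \<times> cbox 0 (sqrt 2)"
      hence "V (snd p) \<le> 1" "1 < fst p" using V_le1[of "snd p"] by (auto simp: cbox_interval)
      thus "sqrt (fst p - V (snd p)) \<noteq> 0" by simp
    qed
    have "continuous_on ({1<..} \<times> cbox 0 (sqrt 2)) (\<lambda>p. f (snd p) / sqrt (fst p - V (snd p)))"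
      by (intro continuous_on_divide continuous_on_compose2[OF cont] continuous_intros
          continuous_on_compose2[OF cV] nz) auto
    thus ?thesis by (simp add: case_prod_beta)
  qed
  from integral_continuous_on_param[OF this] show ?thesis by (simp add: XX_def cbox_interval)
qed

lemma JJ1_pos: assumes "0 \<le> s" "s < 1" shows "pi/2 \<le> JJ (-pi/2) (pi/2) s (\<lambda>_. 1)"
proof -
  have pos: "0 < 2 + 2 * s * sin t" for t
  proof -
    have "-1 \<le> sin t" by simp
    hence "-s \<le> s * sin t" using assms by (metis mult.right_neutral mult_left_mono mult_minus_right)
    thus ?thesis using assms by linarith
  qed
  have le2: "1/2 \<le> 1 / gg s t" for t
  proof -
    have "s * sin t \<le> 1" using assms by (smt (verit) mult_left_le sin_le_one)
    hence "gg s t \<le> 2" unfolding gg_def by (simp add: real_sqrt_le_iff[of _ 4, simplified])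
    moreover have "0 < gg s t" using pos[of t] by (simp add: gg_def)
    ultimately show ?thesis by (simp add: field_simps)
  qed
  have "integral {-pi/2..pi/2} (\<lambda>_. 1/2) \<le> integral {-pi/2..pi/2} (\<lambda>t. 1 / gg s t)"
    by (intro integral_le integrable_continuous_interval cont_theta[OF continuous_on_const, of _ _ _ 1, simplified]
        continuous_on_const le2 pos)
  moreover have "integral {-pi/2..pi/2} (\<lambda>_. 1/2::real) = pi/2" by simp
  ultimately show ?thesis by (simp add: JJ_def)
qed

lemma JJ_zero: "a \<le> b \<Longrightarrow> JJ a b 0 f = (b - a) * (f (sqrt 2) / sqrt 2)"
  by (simp add: JJ_def gg_def)

lemma mE_formula:
  assumes "0 < E" "E \<noteq> 1" "continuous_on UNIV \<phi>"
  shows "integral\<^sup>L (mE E) \<phi> = KK E (\<lambda>x. \<phi> x + \<phi> (-x)) / (2 * KK E (\<lambda>_. 1))"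
  using R2[OF assms] Cnorm_eq[OF assms(1,2)] by (simp add: field_simps)

lemma case_lt1:
  fixes \<phi> :: "real \<Rightarrow> real"
  assumes cont: "continuous_on UNIV \<phi>" and E0: "0 \<le> E0" "E0 < 1"
  shows "((\<lambda>E. integral\<^sup>L (mE E) \<phi>) \<longlongrightarrow> integral\<^sup>L (mE E0) \<phi>) (at E0 within {0..})"
proof -
  define \<psi> where "\<psi> = (\<lambda>x. \<phi> x + \<phi> (-x))"
  have c\<psi>: "continuous_on UNIV \<psi>" unfolding \<psi>_def
    by (intro continuous_intros cont continuous_on_compose2[OF cont]) auto
  define G where "G E = JJ (-pi/2) (pi/2) (sqrt E) \<psi> / (2 * JJ (-pi/2) (pi/2) (sqrt E) (\<lambda>_. 1))" for E
  have FG: "integral\<^sup>L (mE E) \<phi> = G E" if E: "E \<in> {0..<1}" for E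
  proof (cases "E = 0")
    case True
    have ne: "- sqrt 2 \<noteq> (sqrt 2 :: real)" by simp
    have "integral\<^sup>L (mE E) \<phi> = (\<phi> (- sqrt 2) + \<phi> (sqrt 2)) / 2"
      using True ne by (simp add: mE_def integral_pmf_of_set)
    also have "\<dots> = G E" using True pi_gt_zero
      by (simp add: G_def JJ_zero \<psi>_def field_simps)
    finally show ?thesis .
  next
    case False
    hence "0 < E" "E \<noteq> 1" using E by auto
    thus ?thesis using mE_formula[OF _ _ cont] E by (simp add: KK_JJ G_def \<psi>_def)
  qed
  have pos: "s \<in> {0..<1} \<Longrightarrow> t \<in> {-pi/2..pi/2} \<Longrightarrow> 0 < 2 + 2 * s * sin t" for s t
  proof -
    assume "s \<in> {0..<1}"
    hence s: "0 \<le> s" "s < 1" by auto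
    have "-1 \<le> sin t" by simp
    hence "-s \<le> s * sin t" using s by (metis mult.right_neutral mult_left_mono mult_minus_right)
    thus ?thesis using s by linarith
  qed
  have sq: "continuous_on {0..<1} sqrt" by (intro continuous_intros)
  have sqi: "sqrt ` {0..<1} \<subseteq> {0..<(1::real)}" by auto
  have c1: "continuous_on {0..<1} (\<lambda>E. JJ (-pi/2) (pi/2) (sqrt E) f)" if "continuous_on UNIV f" for f
    by (rule continuous_on_compose2[OF JJ_cont[OF that pos] sq sqi])
  have nz: "\<forall>E\<in>{0..<1}. 2 * JJ (-pi/2) (pi/2) (sqrt E) (\<lambda>_. 1) \<noteq> 0"
  proof
    fix E :: real assume "E \<in> {0..<1}"
    hence "pi/2 \<le> JJ (-pi/2) (pi/2) (sqrt E) (\<lambda>_. 1)" by (intro JJ1_pos) auto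
    thus "2 * JJ (-pi/2) (pi/2) (sqrt E) (\<lambda>_. 1) \<noteq> 0" using pi_gt_zero by linarith
  qed
  have contG: "continuous_on {0..<1} G" unfolding G_def
    by (intro continuous_on_divide continuous_on_mult continuous_on_const c1 c\<psi> nz)
  have E0': "E0 \<in> {0..<1}" using E0 by auto
  have "(G \<longlongrightarrow> G E0) (at E0 within {0..<1})"
    using contG E0' by (simp add: continuous_on_def)
  moreover have "at E0 within {0..} = at E0 within {0..<(1::real)}"
    by (rule at_within_nhd[of _ "{..<1}"]) (use E0 in auto)
  ultimately have "(G \<longlongrightarrow> G E0) (at E0 within {0..})" by simp
  moreover have "eventually (\<lambda>E. G E = integral\<^sup>L (mE E) \<phi>) (at E0 within {0..})"
    unfolding \<open>at E0 within {0..} = at E0 within {0..<(1::real)}\<close>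
    by (auto simp: eventually_at_filter FG)
  ultimately show ?thesis using FG[OF E0'] by (simp add: Lim_transform_eventually)
qed

lemma case_gt1:
  fixes \<phi> :: "real \<Rightarrow> real"
  assumes cont: "continuous_on UNIV \<phi>" and E0: "1 < E0"
  shows "((\<lambda>E. integral\<^sup>L (mE E) \<phi>) \<longlongrightarrow> integral\<^sup>L (mE E0) \<phi>) (at E0 within {0..})"
proof -
  define \<psi> where "\<psi> = (\<lambda>x. \<phi> x + \<phi> (-x))"
  have c\<psi>: "continuous_on UNIV \<psi>" unfolding \<psi>_def
    by (intro continuous_intros cont continuous_on_compose2[OF cont]) auto
  define G where "G E = (XX E \<psi> + JJ 0 (pi/2) (sqrt E) \<psi>) / (2 * (XX E (\<lambda>_. 1) + JJ 0 (pi/2) (sqrt E) (\<lambda>_. 1)))" for E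
  have FG: "integral\<^sup>L (mE E) \<phi> = G E" if E: "E \<in> {1<..}" for E
  proof -
    have "0 < E" "E \<noteq> 1" using E by auto
    thus ?thesis using mE_formula[OF _ _ cont] E by (simp add: KK_JJ G_def \<psi>_def)
  qed
  have pos: "s \<in> {0..} \<Longrightarrow> t \<in> {0..pi/2} \<Longrightarrow> 0 < 2 + 2 * s * sin t" for s t
    using sin_ge_zero[of t] by (simp add: add_pos_nonneg)
  have sq: "continuous_on {1<..} sqrt" by (intro continuous_intros)
  have sqi: "sqrt ` {1<..} \<subseteq> {0::real..}" by auto
  have c1: "continuous_on {1<..} (\<lambda>E. JJ 0 (pi/2) (sqrt E) f)" if "continuous_on UNIV f" for f
    by (rule continuous_on_compose2[OF JJ_cont[OF that pos] sq sqi])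
  have nz: "\<forall>E\<in>{1<..}. 2 * (XX E (\<lambda>_. 1) + JJ 0 (pi/2) (sqrt E) (\<lambda>_. 1)) \<noteq> 0"
  proof
    fix E :: real assume "E \<in> {1<..}"
    hence "0 < KK E (\<lambda>_. 1)" by (intro KK_pos) auto
    thus "2 * (XX E (\<lambda>_. 1) + JJ 0 (pi/2) (sqrt E) (\<lambda>_. 1)) \<noteq> 0" using \<open>E \<in> {1<..}\<close> by (simp add: KK_JJ)
  qed
  have contG: "continuous_on {1<..} G" unfolding G_def
    by (intro continuous_on_divide continuous_on_mult continuous_on_add continuous_on_const c1 c\<psi>
        XX_cont nz)
  have E0': "E0 \<in> {1<..}" using E0 by auto
  have "(G \<longlongrightarrow> G E0) (at E0 within {1<..})"
    using contG E0' by (simp add: continuous_on_def)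
  moreover have "at E0 within {0..} = at E0 within {1::real<..}"
    by (rule at_within_nhd[of _ "{1<..}"]) (use E0 in auto)
  ultimately have "(G \<longlongrightarrow> G E0) (at E0 within {0..})" by simp
  moreover have "eventually (\<lambda>E. G E = integral\<^sup>L (mE E) \<phi>) (at E0 within {0..})"
    unfolding \<open>at E0 within {0..} = at E0 within {1::real<..}\<close>
    by (auto simp: eventually_at_filter FG)
  ultimately show ?thesis using FG[OF E0'] by (simp add: Lim_transform_eventually)
qed

lemma one_minus_cos_le: "1 - cos (u::real) \<le> u^2 / 2"
proof -
  have "cos u = 1 - 2 * sin (u/2) ^ 2" using cos_double_sin[of "u/2"] by simp
  moreover have "\<bar>sin (u/2)\<bar> \<le> \<bar>u/2\<bar>" by (rule abs_sin_x_le_abs_x)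
  hence "sin (u/2) ^ 2 \<le> (u/2)^2" by (simp only: abs_le_square_iff)
  ultimately show ?thesis by (simp add: power_divide)
qed

lemma log_integral:
  fixes a b d :: real
  assumes "0 < d" "a \<le> b"
  shows "integral {a..b} (\<lambda>t. 1 / (d + (t - a))) = ln (d + (b - a)) - ln d"
proof -
  have "((\<lambda>t. 1 / (d + (t - a))) has_integral (ln (d + (b - a)) - ln (d + (a - a)))) {a..b}"
  proof (rule fundamental_theorem_of_calculus[OF assms(2)])
    fix x assume x: "x \<in> {a..b}"
    hence "0 < d + (x - a)" using assms by auto
    hence "((\<lambda>t. ln (d + (t - a))) has_real_derivative 1 / (d + (x - a))) (at x)"
      by (auto intro!: derivative_eq_intros)
    thus "((\<lambda>t. ln (d + (t - a))) has_vector_derivative 1 / (d + (x - a))) (at x within {a..b})"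
      by (simp add: has_real_derivative_iff_has_vector_derivative has_vector_derivative_at_within)
  qed
  thus ?thesis by (simp add: integral_unique)
qed

lemma KK_lower:
  assumes E: "1/2 < E" "E < 2" "E \<noteq> 1"
  shows "- ln (sqrt (2 * \<bar>E - 1\<bar>)) \<le> KK E (\<lambda>_. 1)"
proof (cases "E < 1")
  case True
  define s where "s = sqrt E"
  have s: "0 < s" "s < 1" using E True by (auto simp: s_def)
  have sE: "E \<le> s" unfolding s_def
    by (rule real_le_rsqrt) (use E True in \<open>auto simp: power2_eq_square intro: mult_left_le_one_le\<close>)
  define d where "d = sqrt (2 * (1 - s))"
  have d: "0 < d" using s by (simp add: d_def)
  have dle: "d \<le> sqrt (2 * \<bar>E - 1\<bar>)" unfolding d_def using sE True by simp
  have pos: "0 < 2 + 2 * s * sin t" for t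
  proof -
    have "-1 \<le> sin t" by simp
    hence "-s \<le> s * sin t" using s by (metis mult.right_neutral mult_left_mono mult_minus_right less_imp_le)
    thus ?thesis using s by linarith
  qed
  have lo: "1 / (d + (t - (-pi/2))) \<le> 1 / gg s t" if t: "t \<in> {-pi/2..pi/2}" for t
  proof -
    define u where "u = t + pi/2"
    have u: "0 \<le> u" using t by (simp add: u_def)
    have "sin t = - cos u" by (simp add: u_def cos_add)
    hence "2 + 2 * s * sin t = 2 * (1 - s) + 2 * s * (1 - cos u)" by (simp add: algebra_simps)
    also have "\<dots> \<le> 2 * (1 - s) + 2 * (1 - cos u)"
      using s cos_le_one[of u] by (intro add_left_mono mult_right_mono) auto
    also have "\<dots> \<le> d^2 + u^2" using one_minus_cos_le[of u] s by (simp add: d_def)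
    also have "\<dots> \<le> (d + u)^2" using d u by (simp add: power2_sum)
    finally have "gg s t \<le> d + u" unfolding gg_def using d u by (intro real_le_lsqrt) auto
    moreover have "0 < gg s t" using pos[of t] by (simp add: gg_def)
    ultimately show ?thesis by (simp add: u_def frac_le)
  qed
  have "integral {-pi/2..pi/2} (\<lambda>t. 1 / (d + (t - (-pi/2)))) \<le> integral {-pi/2..pi/2} (\<lambda>t. 1 / gg s t)"
  proof (rule integral_le)
    show "(\<lambda>t. 1 / (d + (t - (-pi/2)))) integrable_on {-pi/2..pi/2}"
      using d by (intro integrable_continuous_interval continuous_intros) auto
    show "(\<lambda>t. 1 / gg s t) integrable_on {-pi/2..pi/2}"
      by (intro integrable_continuous_interval cont_theta[OF continuous_on_const, of _ _ _ 1, simplified] pos)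
  qed (rule lo)
  moreover have "integral {-pi/2..pi/2} (\<lambda>t. 1 / (d + (t - (-pi/2)))) = ln (d + pi) - ln d"
    using log_integral[OF d, of "-pi/2" "pi/2"] by simp
  moreover have "0 \<le> ln (d + pi)" using d pi_gt3 by simp
  moreover have "ln d \<le> ln (sqrt (2 * \<bar>E - 1\<bar>))" using d dle by (subst ln_le_cancel_iff) auto
  ultimately show ?thesis using True by (simp add: KK_def s_def)
next
  case False
  hence E1: "1 < E" using E by auto
  define s where "s = sqrt E"
  have s: "0 < s" using E by (simp add: s_def)
  define d where "d = sqrt (E - 1)"
  have d: "0 < d" using E1 by (simp add: d_def)
  have dle: "d \<le> sqrt (2 * \<bar>E - 1\<bar>)" unfolding d_def using E1 by simp
  have lo: "1 / (d + (x - 0)) \<le> 1 / sqrt (E - V x)" if x: "x \<in> {0..sqrt 2}" for x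
  proof -
    have x0: "0 \<le> x" using x by simp
    have "V x \<le> 1" using x V_le1 by auto
    hence p: "0 < E - V x" using E1 by simp
    have "E - V x = d^2 + x^2 - x^4/4" using E1 by (simp add: d_def V_def power2_eq_square power4_eq_xxxx field_simps)
    also have "\<dots> \<le> (d + x)^2"
    proof -
      have "0 \<le> x^4/4" "0 \<le> 2 * d * x" using d x0 by auto
      thus ?thesis unfolding power2_sum by linarith
    qed
    finally have "sqrt (E - V x) \<le> d + x" using d x0 by (intro real_le_lsqrt) auto
    thus ?thesis using p by (simp add: frac_le)
  qed
  have "integral {0..sqrt 2} (\<lambda>x. 1 / (d + (x - 0))) \<le> integral {0..sqrt 2} (\<lambda>x. 1 / sqrt (E - V x))"
  proof (rule integral_le)
    show "(\<lambda>x. 1 / (d + (x - 0))) integrable_on {0..sqrt 2}"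
      using d by (intro integrable_continuous_interval continuous_intros) auto
    show "(\<lambda>x. 1 / sqrt (E - V x)) integrable_on {0..sqrt 2}"
      using integrable_continuous_interval[OF contX[OF E1 continuous_on_const, of 1]] by simp
  qed (rule lo)
  moreover have "integral {0..sqrt 2} (\<lambda>x. 1 / (d + (x - 0))) = ln (d + sqrt 2) - ln d"
    using log_integral[OF d, of 0 "sqrt 2"] by simp
  moreover have "0 \<le> ln (d + sqrt 2)"
  proof (rule ln_ge_zero)
    have "1 \<le> sqrt (2::real)" using real_sqrt_le_mono[of 1 2] by simp
    thus "1 \<le> d + sqrt 2" using d by linarith
  qed
  moreover have "ln d \<le> ln (sqrt (2 * \<bar>E - 1\<bar>))" using d dle by (subst ln_le_cancel_iff) auto
  moreover have "0 \<le> integral {0..pi/2} (\<lambda>t. 1 / gg s t)"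
  proof (rule integral_nonneg)
    show "(\<lambda>t. 1 / gg s t) integrable_on {0..pi/2}"
    proof -
      have pos: "t \<in> {0..pi/2} \<Longrightarrow> 0 < 2 + 2 * s * sin t" for t
        using sin_ge_zero[of t] s by (simp add: add_pos_nonneg)
      show ?thesis by (intro integrable_continuous_interval cont_theta[OF continuous_on_const, of _ _ _ 1, simplified] pos) auto
    qed
    fix t assume t: "t \<in> {0..pi/2}"
    have "0 \<le> 2 + 2 * s * sin t" using sin_ge_zero[of t] s t by (simp add: add_nonneg_nonneg)
    thus "0 \<le> 1 / gg s t" by (simp add: gg_def)
  qed
  ultimately show ?thesis using E1 by (simp add: KK_def s_def)
qed

lemma int_bound:
  fixes f w :: "real \<Rightarrow> real"
  assumes "a \<le> b" "f integrable_on {a..b}" "w integrable_on {a..b}"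
    and le: "\<And>t. t \<in> {a..b} \<Longrightarrow> \<bar>f t\<bar> \<le> \<eta> * w t + C"
  shows "\<bar>integral {a..b} f\<bar> \<le> \<eta> * integral {a..b} w + C * (b - a)"
proof -
  have iw: "(\<lambda>t. \<eta> * w t) integrable_on {a..b}" using assms(3) by (rule integrable_on_mult_right)
  have ig: "(\<lambda>t. \<eta> * w t + C) integrable_on {a..b}" by (intro integrable_add iw integrable_const_ivl)
  have "norm (integral {a..b} f) \<le> integral {a..b} (\<lambda>t. \<eta> * w t + C)"
    by (rule integral_norm_bound_integral[OF assms(2) ig]) (use le in auto)
  also have "\<dots> = \<eta> * integral {a..b} w + C * (b - a)"
    unfolding integral_add[OF iw integrable_const_ivl] integral_mult[OF assms(3), symmetric]
    using assms(1) by simp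
  finally show ?thesis by simp
qed

lemma ptw:
  fixes f :: "real \<Rightarrow> real"
  assumes y: "0 \<le> y" "y \<le> 3" and w: "0 \<le> w" "y * w \<le> B" and B: "0 \<le> B" and e: "0 < \<epsilon>"
    and M: "\<forall>y\<in>{0..3}. \<bar>f y\<bar> \<le> M" and small: "\<forall>y\<in>{0..3}. y < \<epsilon> \<longrightarrow> \<bar>f y\<bar> \<le> \<eta>"
  shows "\<bar>f y\<bar> * w \<le> \<eta> * w + M * B / \<epsilon>"
proof -
  have "\<bar>f 0\<bar> \<le> M" using M by simp
  hence M0: "0 \<le> M" by linarith
  have "\<bar>f 0\<bar> \<le> \<eta>" using small e by simp
  hence eta0: "0 \<le> \<eta>" by linarith
  show ?thesis
  proof (cases "y < \<epsilon>")
    case True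
    hence "\<bar>f y\<bar> * w \<le> \<eta> * w" using small y w by (intro mult_right_mono) auto
    moreover have "0 \<le> M * B / \<epsilon>" using M0 B e by simp
    ultimately show ?thesis by linarith
  next
    case False
    hence ye: "\<epsilon> \<le> y" by simp
    have "\<bar>f y\<bar> * w \<le> M * w" using M y w by (intro mult_right_mono) auto
    also have "\<epsilon> * (M * w) \<le> y * (M * w)" using ye M0 w by (intro mult_right_mono) auto
    hence "M * w \<le> M * (y * w) / \<epsilon>" using e by (simp add: field_simps)
    also have "\<dots> \<le> M * B / \<epsilon>" using M0 w e by (intro divide_right_mono mult_left_mono) auto
    finally have "\<bar>f y\<bar> * w \<le> M * B / \<epsilon>" .
    moreover have "0 \<le> \<eta> * w" using eta0 w by simp
    ultimately show ?thesis by linarith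
  qed
qed

lemma int_lin:
  fixes h1 h2 :: "real \<Rightarrow> real"
  assumes "h1 integrable_on S" "h2 integrable_on S"
  shows "integral S (\<lambda>t. h1 t - c * h2 t) = integral S h1 - c * integral S h2"
proof -
  have i: "(\<lambda>t. c * h2 t) integrable_on S" using assms(2) by (rule integrable_on_mult_right)
  have "integral S (\<lambda>t. h1 t - c * h2 t) = integral S h1 - integral S (\<lambda>t. c * h2 t)"
    by (rule integral_diff[OF assms(1) i])
  also have "integral S (\<lambda>t. c * h2 t) = c * integral S h2"
    by (rule integral_mult[OF assms(2), symmetric])
  finally show ?thesis .
qed

lemma int_lin':
  fixes h1 h2 k :: "real \<Rightarrow> real"
  assumes "h1 integrable_on S" "h2 integrable_on S" "\<And>t. k t = h1 t - c * h2 t"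
  shows "integral S k = integral S h1 - c * integral S h2"
proof -
  have "k = (\<lambda>t. h1 t - c * h2 t)" using assms(3) by auto
  thus ?thesis using int_lin[OF assms(1,2), of c] by (simp only:)
qed

lemma theta_int: "continuous_on UNIV f \<Longrightarrow> (\<And>t. t \<in> {a..b} \<Longrightarrow> 0 < 2 + 2 * s * sin t) \<Longrightarrow>
   (\<lambda>t. f (gg s t) / gg s t) integrable_on {a..b}"
  by (intro integrable_continuous_interval cont_theta)

lemma X_int: "1 < E \<Longrightarrow> continuous_on UNIV f \<Longrightarrow> (\<lambda>x. f x / sqrt (E - V x)) integrable_on {0..sqrt 2}"
  by (intro integrable_continuous_interval contX)

lemma theta_int1: "(\<And>t. t \<in> {a..b} \<Longrightarrow> 0 < 2 + 2 * s * sin t) \<Longrightarrow>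
   (\<lambda>t. 1 / gg s t) integrable_on {a..b}"
  using theta_int[of "\<lambda>_. 1" a b s] by simp

lemma X_int1: "1 < E \<Longrightarrow> (\<lambda>x. 1 / sqrt (E - V x)) integrable_on {0..sqrt 2}"
  using X_int[of E "\<lambda>_. 1"] by simp

lemma pos_lt1: fixes s t :: real assumes "0 \<le> s" "s < 1" shows "0 < 2 + 2 * s * sin t"
proof -
  have "-1 \<le> sin t" by simp
  hence "-s \<le> s * sin t" using assms by (metis mult.right_neutral mult_left_mono mult_minus_right)
  thus ?thesis using assms by linarith
qed

lemma pos_half: assumes "0 \<le> s" "t \<in> {0..pi/2}" shows "0 < 2 + 2 * s * sin t"
  using sin_ge_zero[of t] assms by (simp add: add_pos_nonneg)

lemma KK_lin:
  assumes E: "0 < E" "E \<noteq> 1" and cont: "continuous_on UNIV f"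
  shows "KK E (\<lambda>x. f x - c) = KK E f - c * KK E (\<lambda>_. 1)"
proof -
  define s where "s = sqrt E"
  have s: "0 < s" using E by (simp add: s_def)
  have J: "JJ a b s (\<lambda>x. f x - c) = JJ a b s f - c * JJ a b s (\<lambda>_. 1)"
    if p: "\<And>t. t \<in> {a..b} \<Longrightarrow> 0 < 2 + 2 * s * sin t" for a b
    unfolding JJ_def by (rule int_lin'[OF theta_int[OF cont p] theta_int1[OF p]])
      (auto simp: divide_inverse left_diff_distrib)
  show ?thesis
  proof (cases "E < 1")
    case True
    have s1: "s < 1" using True by (simp add: s_def)
    have p: "\<And>t. t \<in> {-pi/2..pi/2} \<Longrightarrow> 0 < 2 + 2 * s * sin t" using pos_lt1 s s1 by auto
    show ?thesis using True J[OF p] by (simp add: KK_JJ s_def)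
  next
    case False
    hence E1: "1 < E" using E by simp
    have p: "\<And>t. t \<in> {0..pi/2} \<Longrightarrow> 0 < 2 + 2 * s * sin t" using pos_half s by auto
    have X: "XX E (\<lambda>x. f x - c) = XX E f - c * XX E (\<lambda>_. 1)"
      unfolding XX_def by (rule int_lin'[OF X_int[OF E1 cont] X_int1[OF E1]])
        (auto simp: divide_inverse left_diff_distrib)
    show ?thesis using E1 J[OF p] X by (simp add: KK_JJ s_def algebra_simps)
  qed
qed

lemma KK_bound:
  fixes f :: "real \<Rightarrow> real"
  assumes E: "0 < E" "E < 4" "E \<noteq> 1" and cont: "continuous_on UNIV f" and e: "0 < \<epsilon>"
    and M: "\<forall>y\<in>{0..3}. \<bar>f y\<bar> \<le> M" and small: "\<forall>y\<in>{0..3}. y < \<epsilon> \<longrightarrow> \<bar>f y\<bar> \<le> \<eta>"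
  shows "\<bar>KK E f\<bar> \<le> \<eta> * KK E (\<lambda>_. 1) + 4 * M / \<epsilon>"
proof -
  have "\<bar>f 0\<bar> \<le> M" using M by simp
  hence M0: "0 \<le> M" by linarith
  define s where "s = sqrt E"
  have s: "0 < s" "s < 2" using E by (auto simp: s_def real_sqrt_less_iff[of E 4, simplified])
  have th: "\<bar>f (gg s t) / gg s t\<bar> \<le> \<eta> * (1 / gg s t) + M / \<epsilon>" if p: "0 < 2 + 2 * s * sin t" for t
  proof -
    have g0: "0 < gg s t" using p by (simp add: gg_def)
    have "s * sin t \<le> s" using s sin_le_one[of t] by (intro mult_left_le) auto
    hence "2 + 2 * s * sin t \<le> 9" using s by linarith
    hence g3: "gg s t \<le> 3" unfolding gg_def by (intro real_le_lsqrt) auto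
    have "\<bar>f (gg s t)\<bar> * (1 / gg s t) \<le> \<eta> * (1 / gg s t) + M * 1 / \<epsilon>"
      by (rule ptw[OF _ g3 _ _ _ e M small]) (use g0 in auto)
    thus ?thesis using g0 by (simp add: abs_divide)
  qed
  have thI: "\<bar>JJ a b s f\<bar> \<le> \<eta> * JJ a b s (\<lambda>_. 1) + M / \<epsilon> * (b - a)"
    if ab: "a \<le> b" and p: "\<And>t. t \<in> {a..b} \<Longrightarrow> 0 < 2 + 2 * s * sin t" for a b
  proof -
    have i1: "(\<lambda>t. f (gg s t) / gg s t) integrable_on {a..b}" by (rule theta_int[OF cont]) (rule p)
    have i2: "(\<lambda>t. 1 / gg s t) integrable_on {a..b}" by (rule theta_int1) (rule p)
    have bd: "\<And>t. t \<in> {a..b} \<Longrightarrow> \<bar>f (gg s t) / gg s t\<bar> \<le> \<eta> * (1 / gg s t) + M / \<epsilon>"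
      by (rule th, rule p)
    show ?thesis unfolding JJ_def by (rule int_bound[OF ab i1 i2 bd])
  qed
  show ?thesis
  proof (cases "E < 1")
    case True
    have s1: "s < 1" using True by (simp add: s_def)
    have p: "\<And>t. t \<in> {-pi/2..pi/2} \<Longrightarrow> 0 < 2 + 2 * s * sin t" using pos_lt1 s s1 by auto
    have "\<bar>JJ (-pi/2) (pi/2) s f\<bar> \<le> \<eta> * JJ (-pi/2) (pi/2) s (\<lambda>_. 1) + M / \<epsilon> * (pi/2 - (-pi/2))"
      by (rule thI) (use p in auto)
    hence "\<bar>KK E f\<bar> \<le> \<eta> * KK E (\<lambda>_. 1) + M / \<epsilon> * pi"
      using True by (simp add: KK_JJ s_def)
    moreover have "M / \<epsilon> * pi \<le> 4 * M / \<epsilon>"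
      using M0 e pi_less_4 by (simp add: field_simps mult_left_mono)
    ultimately show ?thesis by linarith
  next
    case False
    hence E1: "1 < E" using E by simp
    have p: "\<And>t. t \<in> {0..pi/2} \<Longrightarrow> 0 < 2 + 2 * s * sin t" using pos_half s by auto
    have J: "\<bar>JJ 0 (pi/2) s f\<bar> \<le> \<eta> * JJ 0 (pi/2) s (\<lambda>_. 1) + M / \<epsilon> * (pi/2 - 0)"
      by (rule thI) (use p in auto)
    have xb: "\<bar>f x / sqrt (E - V x)\<bar> \<le> \<eta> * (1 / sqrt (E - V x)) + M * sqrt 2 / \<epsilon>"
      if x: "x \<in> {0..sqrt 2}" for x
    proof -
      have x0: "0 \<le> x" "x \<le> sqrt 2" using x by auto
      have "V x \<le> 1" using V_le1 x0 by auto
      hence p: "0 < E - V x" using E1 by simp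
      have x3: "x \<le> 3" using x0(2) real_sqrt_le_mono[of 2 9] by simp
      have "x^2 \<le> (sqrt 2)^2" by (rule power_mono) (use x0 in auto)
      hence xx: "x^2 \<le> 2" by simp
      have "x^2 \<le> 2 * (E - V x)"
      proof -
        have eq: "2 * (E - V x) - x^2 = 2 * (E - 1) + x^2 * (2 - x^2) / 2"
          by (simp add: V_def power2_eq_square field_simps)
        have "0 \<le> x^2 * (2 - x^2) / 2" using xx by simp
        hence "0 \<le> 2 * (E - V x) - x^2" unfolding eq using E1 by simp
        thus ?thesis by simp
      qed
      hence "sqrt (x^2) \<le> sqrt (2 * (E - V x))" by (rule real_sqrt_le_mono)
      hence "sqrt (x^2) \<le> sqrt 2 * sqrt (E - V x)" by (simp only: real_sqrt_mult)
      hence "x \<le> sqrt 2 * sqrt (E - V x)" using x0 by simp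
      hence xw: "x * (1 / sqrt (E - V x)) \<le> sqrt 2" using p by (simp add: field_simps)
      have "\<bar>f x\<bar> * (1 / sqrt (E - V x)) \<le> \<eta> * (1 / sqrt (E - V x)) + M * sqrt 2 / \<epsilon>"
        by (rule ptw[OF x0(1) x3 _ xw _ e M small]) (use p in auto)
      thus ?thesis using p by (simp add: abs_divide)
    qed
    have X: "\<bar>XX E f\<bar> \<le> \<eta> * XX E (\<lambda>_. 1) + M * sqrt 2 / \<epsilon> * (sqrt 2 - 0)"
      unfolding XX_def
      by (rule int_bound[OF _ X_int[OF E1 cont] X_int1[OF E1]])
         (simp, rule xb)
    have "\<bar>KK E f\<bar> \<le> \<bar>XX E f\<bar> + \<bar>JJ 0 (pi/2) s f\<bar>"
      using E1 by (simp add: KK_JJ s_def)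
    also have "\<dots> \<le> \<eta> * KK E (\<lambda>_. 1) + (M * sqrt 2 / \<epsilon> * sqrt 2 + M / \<epsilon> * (pi/2))"
      using X J E1 by (simp add: KK_JJ s_def algebra_simps)
    also have "M * sqrt 2 / \<epsilon> * sqrt 2 + M / \<epsilon> * (pi/2) = (M / \<epsilon>) * (2 + pi/2)"
      using e by (simp add: field_simps)
    also have "\<dots> \<le> (M / \<epsilon>) * 4" using M0 e pi_less_4 by (intro mult_left_mono) auto
    also have "(M / \<epsilon>) * 4 = 4 * M / \<epsilon>" by simp
    finally show ?thesis by simp
  qed
qed

lemma case_eq1:
  fixes \<phi> :: "real \<Rightarrow> real"
  assumes cont: "continuous_on UNIV \<phi>"
  shows "((\<lambda>E. integral\<^sup>L (mE E) \<phi>) \<longlongrightarrow> integral\<^sup>L (mE 1) \<phi>) (at 1 within {0..})"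
proof -
  define \<psi> where "\<psi> = (\<lambda>x. \<phi> x + \<phi> (-x))"
  have c\<psi>: "continuous_on UNIV \<psi>" unfolding \<psi>_def
    by (intro continuous_intros cont continuous_on_compose2[OF cont]) auto
  define f where "f = (\<lambda>y. \<psi> y - \<psi> 0)"
  have cf: "continuous_on UNIV f" unfolding f_def by (intro continuous_intros c\<psi>)
  have F1: "integral\<^sup>L (mE 1) \<phi> = \<phi> 0"
    by (simp add: mE_def return_pmf.rep_eq integral_return)
  have FE: "integral\<^sup>L (mE E) \<phi> - \<phi> 0 = KK E f / (2 * KK E (\<lambda>_. 1))" if E: "0 < E" "E \<noteq> 1" for E
  proof -
    have T: "0 < KK E (\<lambda>_. 1)" by (rule KK_pos[OF E])
    have "KK E f = KK E \<psi> - \<psi> 0 * KK E (\<lambda>_. 1)" unfolding f_def by (rule KK_lin[OF E c\<psi>])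
    thus ?thesis using mE_formula[OF E cont] T by (simp add: \<psi>_def field_simps)
  qed
  obtain M where M: "\<forall>y\<in>{0..3}. \<bar>f y\<bar> \<le> M"
  proof -
    have "compact (f ` {0..3})" by (intro compact_continuous_image continuous_on_subset[OF cf]) auto
    thus ?thesis using that compact_imp_bounded[THEN bounded_real[THEN iffD1]] by fastforce
  qed
  show ?thesis
  proof (rule tendstoI)
    fix e :: real assume e: "0 < e"
    have "isCont \<psi> 0" using c\<psi> by (simp add: continuous_on_eq_continuous_at)
    hence "\<psi> \<midarrow>0\<rightarrow> \<psi> 0" by (simp add: isCont_def)
    from LIM_D[OF this e] obtain \<epsilon> where eps: "0 < \<epsilon>"
      and epsP0: "\<forall>x. x \<noteq> 0 \<and> norm (x - 0) < \<epsilon> \<longrightarrow> norm (\<psi> x - \<psi> 0) < e" by blast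
    have epsP: "\<And>x. x \<noteq> 0 \<and> norm (x - 0) < \<epsilon> \<Longrightarrow> norm (\<psi> x - \<psi> 0) < e" using epsP0 by blast
    have small: "\<forall>y\<in>{0..3}. y < \<epsilon> \<longrightarrow> \<bar>f y\<bar> \<le> e"
    proof (intro ballI impI)
      fix y :: real assume y: "y \<in> {0..3}" "y < \<epsilon>"
      show "\<bar>f y\<bar> \<le> e"
      proof (cases "y = 0")
        case True thus ?thesis using e by (simp add: f_def)
      next
        case False thus ?thesis using epsP[of y] y by (auto simp: f_def)
      qed
    qed
    define C where "C = 4 * M / \<epsilon>"
    define K where "K = C / e + 1"
    define \<rho> where "\<rho> = min (1/2) (exp (- 2 * K) / 2)"
    have \<rho>: "0 < \<rho>" by (simp add: \<rho>_def)
    have main: "\<bar>integral\<^sup>L (mE E) \<phi> - \<phi> 0\<bar> < e" if E: "E \<ge> 0" "E \<noteq> 1" "\<bar>E - 1\<bar> < \<rho>" for E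
    proof -
      have "\<rho> \<le> 1/2" unfolding \<rho>_def by simp
      hence r: "\<bar>E - 1\<bar> < 1/2" using E(3) by linarith
      have E2: "1/2 < E" "E < 2" using r abs_less_iff[of "E - 1" "1/2"] by linarith+
      have E0: "0 < E" using E2 by simp
      define T where "T = KK E (\<lambda>_. 1)"
      have T: "0 < T" unfolding T_def by (rule KK_pos[OF E0 E(2)])
      have bd: "\<bar>KK E f\<bar> \<le> e * T + C"
        unfolding T_def C_def by (rule KK_bound[OF E0 _ E(2) cf eps M small]) (use E2 in auto)
      have lw: "- ln (sqrt (2 * \<bar>E - 1\<bar>)) \<le> T" unfolding T_def by (rule KK_lower[OF E2 E(2)])
      have pos: "0 < 2 * \<bar>E - 1\<bar>" using E by simp
      have "2 * \<bar>E - 1\<bar> < exp (- 2 * K)" using E by (simp add: \<rho>_def)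
      hence "sqrt (2 * \<bar>E - 1\<bar>) < sqrt (exp (- 2 * K))" by simp
      also have "exp (- 2 * K) = (exp (- K))^2" by (simp add: power2_eq_square exp_add[symmetric])
      also have "sqrt ((exp (- K))^2) = exp (- K)" by simp
      finally have "ln (sqrt (2 * \<bar>E - 1\<bar>)) < ln (exp (- K))" using pos by (subst ln_less_cancel_iff) auto
      hence "ln (sqrt (2 * \<bar>E - 1\<bar>)) < - K" by simp
      hence "K < T" using lw by linarith
      hence "C < e * T" using e unfolding K_def by (simp add: field_simps)
      have "\<bar>integral\<^sup>L (mE E) \<phi> - \<phi> 0\<bar> = \<bar>KK E f\<bar> / (2 * T)"
        using FE[OF E0 E(2)] T by (simp add: T_def abs_divide)
      also have "\<dots> \<le> (e * T + C) / (2 * T)" using bd T by (simp add: divide_right_mono)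
      also have "\<dots> < (e * T + e * T) / (2 * T)" using \<open>C < e * T\<close> T
        by (intro divide_strict_right_mono) (auto simp: mult.commute)
      also have "\<dots> = e" using T by simp
      finally show ?thesis .
    qed
    show "\<forall>\<^sub>F E in at 1 within {0..}. dist (integral\<^sup>L (mE E) \<phi>) (integral\<^sup>L (mE 1) \<phi>) < e"
      unfolding eventually_at
    proof (intro exI[of _ \<rho>] conjI ballI impI)
      show "0 < \<rho>" by (rule \<rho>)
      fix E :: real assume "E \<in> {0..}" "E \<noteq> 1 \<and> dist E 1 < \<rho>"
      hence "E \<ge> 0" "E \<noteq> 1" "\<bar>E - 1\<bar> < \<rho>" by (auto simp: dist_real_def)
      from main[OF this] show "dist (integral\<^sup>L (mE E) \<phi>) (integral\<^sup>L (mE 1) \<phi>) < e"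
        unfolding F1 dist_real_def .
    qed
  qed
qed

theorem proposition3p9:
  fixes \<phi> :: "real \<Rightarrow> real" and E0 :: real
  assumes "continuous_on UNIV \<phi>" and "E0 \<ge> 0"
  shows "((\<lambda>E. integral\<^sup>L (mE E) \<phi>) \<longlongrightarrow> integral\<^sup>L (mE E0) \<phi>)
           (at E0 within {0..})"
proof -
  consider "E0 < 1" | "E0 = 1" | "1 < E0" by linarith
  thus ?thesis
  proof cases
    case 1 thus ?thesis using case_lt1[OF assms(1) assms(2)] by blast
  next
    case 2 thus ?thesis using case_eq1[OF assms(1)] by simp
  next
    case 3 thus ?thesis using case_gt1[OF assms(1)] by blast
  qed
qed

end
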